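(* Let $G=(V,E)$ be a connected undirected unweighted graph in which every node has a self-loop, and let $k\le|V|$ be a positive integer. Let $S^*\in\arg\max_{S\subseteq V,|S|=k}\operatorname{fp}^{\infty}(G^S)$. Let $S'=S'_k$, where $S'_0=\emptyset$ and, for $i=1,\dots,k$, $S'_i=S'_{i-1}\cup\{v_i\}$ with $v_i\in\arg\max_{v\in V\setminus S'_{i-1}}\operatorname{fp}^{\infty}(G^{S'_{i-1}\cup\{v\}})$. Then $\operatorname{fp}^{\infty}(G^{S'})\ge\left(1-\frac1e\right)\operatorname{fp}^{\infty}(G^{S^*})$.
   Context: Positional Voter model. A graph $G=(V,E,w)$ has node set $V$ with $|V|=n$, edge set $E\subseteq V\times V$ and weights $w\colon E\to\mathbb{R}_{>0}$; $\operatorname{in}(u)=\{v\in V:(v,u)\in E\}$. "Undirected unweighted" means $E$ is symmetric and $w\equiv 1$; "self-loop at $u$" means $(u,u)\in E$. A configuration is a set $X\subseteq V$ (the nodes carrying the novel trait $A$). Given a biased set $S\subseteq V$ and bias $\delta\ge 0$, define $f^S_X(v\mid u)=1+\delta$ if $v\in X$ and $u\in S$, and $1$ otherwise. The process $(\mathcal{X}_t)_{t\ge0}$: given $\mathcal{X}_t=X$, a node $u$ is chosen uniformly at random from $V$, then $v\in\operatorname{in}(u)$ is chosen with probability $\frac{f^S_X(v\mid u)\,w(v,u)}{\sum_{x\in\operatorname{in}(u)} f^S_X(x\mid u)\,w(x,u)}$, and $\mathcal{X}_{t+1}=X\cup\{u\}$ if $v\in X$, $\mathcal{X}_{t+1}=X\setminus\{u\}$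 otherwise. Define $\operatorname{fp}(G^S,\delta,X)=\mathbb{P}[\exists t\ge0:\mathcal{X}_t=V\mid\mathcal{X}_0=X]$, $\operatorname{fp}(G^S,\delta)=\frac1n\sum_{u\in V}\operatorname{fp}(G^S,\delta,\{u\})$, and $\operatorname{fp}^{\infty}(G^S)=\lim_{\delta\to\infty}\operatorname{fp}(G^S,\delta)$. *)

theory Defs
  imports "HOL-Analysis.Analysis"
begin

text \<open>Positional Voter model on a weighted graph with node set V, edge set E
  and weight function w.  A configuration is a set X of nodes carrying trait A.\<close>

definition in_nbrs :: "('v \<times> 'v) set \<Rightarrow> 'v set \<Rightarrow> 'v \<Rightarrow> 'v set" where
  "in_nbrs E V u = {v \<in> V. (v, u) \<in> E}"

definition fitness :: "'v set \<Rightarrow> real \<Rightarrow> 'v set \<Rightarrow> 'v \<Rightarrow> 'v \<Rightarrow> real" where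
  "fitness S \<delta> X v u = (if v \<in> X \<and> u \<in> S then 1 + \<delta> else 1)"

definition copyA_prob ::
  "'v set \<Rightarrow> ('v \<times> 'v) set \<Rightarrow> ('v \<Rightarrow> 'v \<Rightarrow> real) \<Rightarrow> 'v set \<Rightarrow> real \<Rightarrow> 'v set \<Rightarrow> 'v \<Rightarrow> real" where
  "copyA_prob V E w S \<delta> X u =
     (\<Sum>v\<in>in_nbrs E V u \<inter> X. fitness S \<delta> X v u * w v u) /
     (\<Sum>x\<in>in_nbrs E V u. fitness S \<delta> X x u * w x u)"

text \<open>reach_within t X = P[\<exists>s \<le> t. X_s = V | X_0 = X]  (first-step recursion).\<close>
fun reach_within ::
  "'v set \<Rightarrow> ('v \<times> 'v) set \<Rightarrow> ('v \<Rightarrow> 'v \<Rightarrow> real) \<Rightarrow> 'v set \<Rightarrow> real \<Rightarrow> nat \<Rightarrow> 'v set \<Rightarrow> real" where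
  "reach_within V E w S \<delta> 0 X = (if X = V then 1 else 0)"
| "reach_within V E w S \<delta> (Suc t) X =
     (if X = V then 1 else
      (1 / real (card V)) * (\<Sum>u\<in>V.
          copyA_prob V E w S \<delta> X u * reach_within V E w S \<delta> t (X \<union> {u})
        + (1 - copyA_prob V E w S \<delta> X u) * reach_within V E w S \<delta> t (X - {u})))"

text \<open>fp(G^S, \<delta>, X) = P[\<exists>t. X_t = V | X_0 = X], the increasing limit of
  the probabilities of hitting V within t steps.\<close>
definition fp_from ::
  "'v set \<Rightarrow> ('v \<times> 'v) set \<Rightarrow> ('v \<Rightarrow> 'v \<Rightarrow> real) \<Rightarrow> 'v set \<Rightarrow> real \<Rightarrow> 'v set \<Rightarrow> real" where
  "fp_from V E w S \<delta> X = (SUP t. reach_within V E w S \<delta> t X)"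

definition fp ::
  "'v set \<Rightarrow> ('v \<times> 'v) set \<Rightarrow> ('v \<Rightarrow> 'v \<Rightarrow> real) \<Rightarrow> 'v set \<Rightarrow> real \<Rightarrow> real" where
  "fp V E w S \<delta> = (1 / real (card V)) * (\<Sum>u\<in>V. fp_from V E w S \<delta> {u})"

definition fp_inf ::
  "'v set \<Rightarrow> ('v \<times> 'v) set \<Rightarrow> ('v \<Rightarrow> 'v \<Rightarrow> real) \<Rightarrow> 'v set \<Rightarrow> real" where
  "fp_inf V E w S = Lim at_top (\<lambda>\<delta>. fp V E w S \<delta>)"

end

theory Submission
  imports Defs
begin


fun rw :: "('v set \<Rightarrow> bool) \<Rightarrow> 'v set \<Rightarrow> ('v set \<Rightarrow> 'v \<Rightarrow> real) \<Rightarrow> nat \<Rightarrow> 'v set \<Rightarrow> real" where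
  "rw D V p 0 X = (if D X then 1 else 0)"
| "rw D V p (Suc t) X = (if D X then 1 else (1 / real (card V)) *
     (\<Sum>u\<in>V. p X u * rw D V p t (X \<union> {u}) + (1 - p X u) * rw D V p t (X - {u})))"

definition okp :: "'v set \<Rightarrow> ('v set \<Rightarrow> 'v \<Rightarrow> real) \<Rightarrow> bool" where
  "okp V p \<longleftrightarrow> (\<forall>X u. X \<subseteq> V \<longrightarrow> u \<in> V \<longrightarrow> 0 \<le> p X u \<and> p X u \<le> 1)"

lemma avg_le:
  assumes "finite V" "V \<noteq> {}" "\<And>u. u \<in> V \<Longrightarrow> f u \<le> (c::real)"
  shows "(1 / real (card V)) * (\<Sum>u\<in>V. f u) \<le> c"
proof -
  have "(\<Sum>u\<in>V. f u) \<le> (\<Sum>u\<in>V. c)" by (rule sum_mono) (use assms in auto)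
  also have "\<dots> = real (card V) * c" by simp
  finally show ?thesis using assms card_gt_0_iff[of V]
    by (simp add: divide_le_eq mult.commute)
qed

lemma avg_ge:
  assumes "finite V" "V \<noteq> {}" "\<And>u. u \<in> V \<Longrightarrow> f u \<ge> (c::real)"
  shows "(1 / real (card V)) * (\<Sum>u\<in>V. f u) \<ge> c"
proof -
  have "(\<Sum>u\<in>V. f u) \<ge> (\<Sum>u\<in>V. c)" by (rule sum_mono) (use assms in auto)
  moreover have "(\<Sum>u\<in>V. c) = real (card V) * c" by simp
  ultimately show ?thesis using assms card_gt_0_iff[of V]
    by (simp add: le_divide_eq mult.commute)
qed

lemma avg_mono:
  assumes "\<And>u. u \<in> V \<Longrightarrow> f u \<le> (g u::real)"
  shows "(1 / real (card V)) * (\<Sum>u\<in>V. f u) \<le> (1 / real (card V)) * (\<Sum>u\<in>V. g u)"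
  by (intro mult_left_mono sum_mono) (use assms in auto)

lemma conv_le1: "0 \<le> (p::real) \<Longrightarrow> p \<le> 1 \<Longrightarrow> a \<le> 1 \<Longrightarrow> b \<le> 1 \<Longrightarrow> p * a + (1 - p) * b \<le> 1"
  by (smt (verit, best) mult_left_le mult_nonneg_nonneg)
lemma conv_ge0: "0 \<le> (p::real) \<Longrightarrow> p \<le> 1 \<Longrightarrow> 0 \<le> a \<Longrightarrow> 0 \<le> b \<Longrightarrow> 0 \<le> p * a + (1 - p) * b"
  by simp
lemma conv_mono: "0 \<le> (p::real) \<Longrightarrow> p \<le> q \<Longrightarrow> q \<le> 1 \<Longrightarrow> a \<le> a' \<Longrightarrow> b \<le> b' \<Longrightarrow> b' \<le> a'
   \<Longrightarrow> p * a + (1 - p) * b \<le> q * a' + (1 - q) * b'"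
proof -
  assume h: "0 \<le> p" "p \<le> q" "q \<le> 1" "a \<le> a'" "b \<le> b'" "b' \<le> a'"
  have "p * a + (1 - p) * b \<le> p * a' + (1 - p) * b'"
    using h by (intro add_mono mult_left_mono) auto
  also have "\<dots> = b' + p * (a' - b')" by (simp add: algebra_simps)
  also have "\<dots> \<le> b' + q * (a' - b')" using h by (intro add_left_mono mult_right_mono) auto
  also have "\<dots> = q * a' + (1 - q) * b'" by (simp add: algebra_simps)
  finally show ?thesis .
qed

lemma rw_D: "D X \<Longrightarrow> rw D V p t X = 1"
  by (cases t) auto

lemma rw_bounds:
  assumes "finite V" "V \<noteq> {}" "okp V p" "X \<subseteq> V"
  shows "0 \<le> rw D V p t X \<and> rw D V p t X \<le> 1"
  using assms(4)
proof (induction t arbitrary: X)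
  case 0 then show ?case by simp
next
  case (Suc t)
  show ?case
  proof (cases "D X")
    case False
    have pp: "0 \<le> p X u" "p X u \<le> 1" if "u \<in> V" for u
      using assms(3) Suc.prems that unfolding okp_def by auto
    have s: "X \<union> {u} \<subseteq> V" "X - {u} \<subseteq> V" if "u \<in> V" for u using Suc.prems that by auto
    show ?thesis using False
      apply (simp only: rw.simps if_False)
      apply (intro conjI)
       apply (rule mult_nonneg_nonneg, simp)
       apply (rule sum_nonneg)
       apply (rule conv_ge0) using pp s Suc.IH apply auto[4]
      apply (rule avg_le[OF assms(1,2)])
      apply (rule conv_le1) using pp s Suc.IH by auto
  qed simp
qed

lemma rw_mono_t:
  assumes "finite V" "V \<noteq> {}" "okp V p" "X \<subseteq> V"
  shows "rw D V p t X \<le> rw D V p (Suc t) X"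
  using assms(4)
proof (induction t arbitrary: X)
  case 0 then show ?case using rw_bounds[OF assms(1-3) 0, of D 1] by (auto simp: rw_D simp del: rw.simps(2))
next
  case (Suc t)
  have pp: "0 \<le> p X u" "p X u \<le> 1" if "u \<in> V" for u
    using assms(3) Suc.prems that unfolding okp_def by auto
  have s: "X \<union> {u} \<subseteq> V" "X - {u} \<subseteq> V" if "u \<in> V" for u using Suc.prems that by auto
  show ?case
    apply (simp only: rw.simps(2)[of D V p t X] rw.simps(2)[of D V p "Suc t" X])
    apply (cases "D X", simp, simp only: if_False)
    apply (rule avg_mono)
    apply (rule add_mono; rule mult_left_mono)
    using pp s Suc.IH by auto
qed

lemma rw_incseq:
  assumes "finite V" "V \<noteq> {}" "okp V p" "X \<subseteq> V"
  shows "incseq (\<lambda>t. rw D V p t X)"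
  by (rule incseq_SucI) (rule rw_mono_t[OF assms])

lemma rw_D_mono:
  assumes "finite V" "V \<noteq> {}" "okp V p" "X \<subseteq> V" "\<And>X. X \<subseteq> V \<Longrightarrow> D1 X \<Longrightarrow> D2 X"
  shows "rw D1 V p t X \<le> rw D2 V p t X"
  using assms(4)
proof (induction t arbitrary: X)
  case 0 then show ?case using assms(5) by auto
next
  case (Suc t)
  have pp: "0 \<le> p X u" "p X u \<le> 1" if "u \<in> V" for u
    using assms(3) Suc.prems that unfolding okp_def by auto
  have s: "X \<union> {u} \<subseteq> V" "X - {u} \<subseteq> V" if "u \<in> V" for u using Suc.prems that by auto
  show ?case
  proof (cases "D2 X")
    case True then show ?thesis using rw_bounds[OF assms(1-3) Suc.prems, of D1 "Suc t"] by simp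
  next
    case False
    then have "\<not> D1 X" using assms(5) Suc.prems by auto
    with False show ?thesis
      apply (simp only: rw.simps if_False)
      apply (rule avg_mono)
      apply (rule add_mono; rule mult_left_mono)
      using pp s Suc.IH by auto
  qed
qed

lemma rw_attr:
  assumes "finite V" "V \<noteq> {}" "okp V p"
    and pm: "\<And>X Y u. X \<subseteq> Y \<Longrightarrow> Y \<subseteq> V \<Longrightarrow> u \<in> V \<Longrightarrow> p X u \<le> p Y u"
    and Dm: "\<And>X Y. X \<subseteq> Y \<Longrightarrow> Y \<subseteq> V \<Longrightarrow> D X \<Longrightarrow> D Y"
  shows "X \<subseteq> Y \<Longrightarrow> Y \<subseteq> V \<Longrightarrow> rw D V p t X \<le> rw D V p t Y"
proof (induction t arbitrary: X Y)
  case 0 then show ?case using Dm by auto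
next
  case (Suc t)
  have pp: "0 \<le> p Z u" "p Z u \<le> 1" if "u \<in> V" "Z \<subseteq> V" for u Z
    using assms(3) that unfolding okp_def by auto
  show ?case
  proof (cases "D Y")
    case True then show ?thesis using rw_bounds[OF assms(1-3), of X D "Suc t"] Suc.prems by simp
  next
    case False
    then have "\<not> D X" using Dm Suc.prems by auto
    have t: "p X u * rw D V p t (X \<union> {u}) + (1 - p X u) * rw D V p t (X - {u})
      \<le> p Y u * rw D V p t (Y \<union> {u}) + (1 - p Y u) * rw D V p t (Y - {u})" if u: "u \<in> V" for u
    proof (rule conv_mono)
      show "0 \<le> p X u" using pp[OF u] Suc.prems by auto
      show "p X u \<le> p Y u" using pm[OF Suc.prems u] .
      show "p Y u \<le> 1" using pp[OF u] Suc.prems by auto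
      show "rw D V p t (X \<union> {u}) \<le> rw D V p t (Y \<union> {u})" using Suc.IH[of "X \<union> {u}" "Y \<union> {u}"] Suc.prems u by auto
      show "rw D V p t (X - {u}) \<le> rw D V p t (Y - {u})" using Suc.IH[of "X - {u}" "Y - {u}"] Suc.prems u by auto
      show "rw D V p t (Y - {u}) \<le> rw D V p t (Y \<union> {u})" using Suc.IH[of "Y - {u}" "Y \<union> {u}"] Suc.prems u by auto
    qed
    with False `\<not> D X` show ?thesis
      apply (simp only: rw.simps if_False)
      by (rule avg_mono) auto
  qed
qed

lemma rw_cmp:
  assumes "finite V" "V \<noteq> {}" "okp V p" "okp V q"
    and pq: "\<And>X u. X \<subseteq> V \<Longrightarrow> u \<in> V \<Longrightarrow> p X u \<le> q X u"
    and qattr: "\<And>t X Y. X \<subseteq> Y \<Longrightarrow> Y \<subseteq> V \<Longrightarrow> rw D V q t X \<le> rw D V q t Y"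
  shows "X \<subseteq> V \<Longrightarrow> rw D V p t X \<le> rw D V q t X"
proof (induction t arbitrary: X)
  case 0 then show ?case by auto
next
  case (Suc t)
  have pp: "0 \<le> p Z u" "p Z u \<le> 1" "0 \<le> q Z u" "q Z u \<le> 1" if "u \<in> V" "Z \<subseteq> V" for u Z
    using assms(3,4) that unfolding okp_def by auto
  show ?case
  proof (cases "D X")
    case False
    have t: "p X u * rw D V p t (X \<union> {u}) + (1 - p X u) * rw D V p t (X - {u})
      \<le> q X u * rw D V q t (X \<union> {u}) + (1 - q X u) * rw D V q t (X - {u})" if u: "u \<in> V" for u
    proof (rule conv_mono)
      show "0 \<le> p X u" using pp[OF u] Suc.prems by auto
      show "p X u \<le> q X u" using pq Suc.prems u by auto
      show "q X u \<le> 1" using pp[OF u] Suc.prems by auto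
      show "rw D V p t (X \<union> {u}) \<le> rw D V q t (X \<union> {u})" using Suc.IH[of "X \<union> {u}"] Suc.prems u by auto
      show "rw D V p t (X - {u}) \<le> rw D V q t (X - {u})" using Suc.IH[of "X - {u}"] Suc.prems u by auto
      show "rw D V q t (X - {u}) \<le> rw D V q t (X \<union> {u})" using qattr[of "X - {u}" "X \<union> {u}"] Suc.prems u by auto
    qed
    with False show ?thesis
      apply (simp only: rw.simps if_False)
      by (rule avg_mono) auto
  qed simp
qed

lemma rw_tendsto:
  assumes "\<And>X u. ((\<lambda>d. p d X u) \<longlongrightarrow> q X u) F"
  shows "((\<lambda>d. rw D V (p d) t X) \<longlongrightarrow> rw D V q t X) F"
proof (induction t arbitrary: X)
  case 0 then show ?case by simp
next
  case (Suc t)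
  show ?case
  proof (cases "D X")
    case False
    then show ?thesis
      by (simp only: rw.simps if_False, intro tendsto_intros assms Suc.IH)
  qed simp
qed

definition Phi where "Phi D V p X = (SUP t. rw D V p t X)"

lemma rw_lim:
  assumes "finite V" "V \<noteq> {}" "okp V p" "X \<subseteq> V"
  shows "(\<lambda>t. rw D V p t X) \<longlonglongrightarrow> Phi D V p X"
  unfolding Phi_def
  by (rule LIMSEQ_incseq_SUP[OF _ rw_incseq[OF assms]])
     (use rw_bounds[OF assms] in \<open>auto intro!: bdd_aboveI2[where M=1]\<close>)

lemma Phi_bounds:
  assumes "finite V" "V \<noteq> {}" "okp V p" "X \<subseteq> V"
  shows "0 \<le> Phi D V p X \<and> Phi D V p X \<le> 1"
  using rw_lim[OF assms, of D] rw_bounds[OF assms, of D]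
  by (meson LIMSEQ_le_const LIMSEQ_le_const2)

lemma rw_le_Phi:
  assumes "finite V" "V \<noteq> {}" "okp V p" "X \<subseteq> V"
  shows "rw D V p t X \<le> Phi D V p X"
  unfolding Phi_def
  by (rule cSUP_upper) (use rw_bounds[OF assms] in \<open>auto intro!: bdd_aboveI2[where M=1]\<close>)

lemma Phi_D: "D X \<Longrightarrow> Phi D V p X = 1"
  unfolding Phi_def by (simp add: rw_D)

lemma Phi_harm:
  assumes "finite V" "V \<noteq> {}" "okp V p" "X \<subseteq> V" "\<not> D X"
  shows "Phi D V p X = (1 / real (card V)) *
     (\<Sum>u\<in>V. p X u * Phi D V p (X \<union> {u}) + (1 - p X u) * Phi D V p (X - {u}))"
proof -
  have s: "X \<union> {u} \<subseteq> V" "X - {u} \<subseteq> V" if "u \<in> V" for u using assms(4) that by auto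
  have "(\<lambda>t. rw D V p (Suc t) X) \<longlonglongrightarrow> (1 / real (card V)) *
     (\<Sum>u\<in>V. p X u * Phi D V p (X \<union> {u}) + (1 - p X u) * Phi D V p (X - {u}))"
    using assms(5) apply (simp only: rw.simps if_False)
    apply (intro tendsto_intros)
    using rw_lim[OF assms(1-3)] s by auto
  moreover have "(\<lambda>t. rw D V p (Suc t) X) \<longlonglongrightarrow> Phi D V p X"
    using rw_lim[OF assms(1-4)] by (rule LIMSEQ_Suc)
  ultimately show ?thesis using LIMSEQ_unique by blast
qed




locale vg =
  fixes V :: "'v set" and E :: "('v \<times> 'v) set"
  assumes finV: "finite V" and Vne: "V \<noteq> {}" and E_sub: "E \<subseteq> V \<times> V"
    and loops: "\<forall>u\<in>V. (u, u) \<in> E"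
    and conn: "\<forall>u\<in>V. \<forall>v\<in>V. (u, v) \<in> E\<^sup>*"
begin

abbreviation N where "N u \<equiv> in_nbrs E V u"

lemma N_fin: "finite (N u)" unfolding in_nbrs_def using finV by auto
lemma N_self: "u \<in> V \<Longrightarrow> u \<in> N u" unfolding in_nbrs_def using loops by auto
lemma N_card: "u \<in> V \<Longrightarrow> card (N u) > 0" using N_fin N_self card_gt_0_iff by blast

definition pinf :: "'v set \<Rightarrow> 'v set \<Rightarrow> 'v \<Rightarrow> real" where
  "pinf S X u = (if u \<in> S then (if N u \<inter> X \<noteq> {} then 1 else 0)
                 else real (card (N u \<inter> X)) / real (card (N u)))"

lemma pinf_ok: "okp V (pinf S)"
  unfolding okp_def pinf_def
  using N_fin by (auto simp: divide_le_eq_1 card_mono)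

lemma pinf_mono: assumes "X \<subseteq> Y" "u \<in> V" shows "pinf S X u \<le> pinf S Y u"
proof -
  have "card (N u \<inter> X) \<le> card (N u \<inter> Y)" using assms N_fin by (intro card_mono) auto
  then have "real (card (N u \<inter> X)) / real (card (N u)) \<le> real (card (N u \<inter> Y)) / real (card (N u))"
    by (intro divide_right_mono) auto
  then show ?thesis unfolding pinf_def using assms by auto
qed

abbreviation cA where "cA S d \<equiv> copyA_prob V E (\<lambda>_ _. 1) S d"

lemma cA_nonS: "u \<notin> S \<Longrightarrow> cA S d X u = real (card (N u \<inter> X)) / real (card (N u))"
  unfolding copyA_prob_def fitness_def by simp

lemma cA_S: assumes "u \<in> S"
  shows "cA S d X u = (1 + d) * real (card (N u \<inter> X)) /
             ((1 + d) * real (card (N u \<inter> X)) + real (card (N u - X)))"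
proof -
  have "(\<Sum>x\<in>N u. fitness S d X x u * 1) = (\<Sum>x\<in>N u \<inter> X. 1 + d) + (\<Sum>x\<in>N u - X. 1)"
    unfolding fitness_def using assms N_fin
    by (simp add: sum.If_cases Diff_eq)
  moreover have "(\<Sum>v\<in>N u \<inter> X. fitness S d X v u * 1) = (\<Sum>x\<in>N u \<inter> X. 1 + d)"
    unfolding fitness_def using assms by simp
  ultimately show ?thesis unfolding copyA_prob_def by (simp add: mult.commute)
qed

lemma cA_bounds: assumes "0 \<le> d" "u \<in> V"
  shows "0 \<le> cA S d X u \<and> cA S d X u \<le> pinf S X u"
proof (cases "u \<in> S")
  case True
  show ?thesis
  proof (cases "N u \<inter> X = {}")
    case True
    then show ?thesis using \<open>u \<in> S\<close> by (simp add: cA_S pinf_def)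
  next
    case False
    then have c: "card (N u \<inter> X) > 0" using N_fin by (simp add: card_gt_0_iff)
    then have "(1 + d) * real (card (N u \<inter> X)) > 0" using assms by simp
    then have "(1 + d) * real (card (N u \<inter> X)) + real (card (N u - X)) > 0"
      by (smt (verit) of_nat_0_le_iff)
    then show ?thesis using \<open>u \<in> S\<close> False assms
      by (simp add: cA_S pinf_def divide_le_eq_1)
  qed
next
  case False
  then show ?thesis by (simp add: cA_nonS pinf_def)
qed

lemma cA_ok: "0 \<le> d \<Longrightarrow> okp V (cA S d)"
  using cA_bounds pinf_ok unfolding okp_def by (meson order_trans)

lemma cA_tendsto: "((\<lambda>d. cA S d X u) \<longlongrightarrow> pinf S X u) at_top"
proof (cases "u \<in> S")
  case True
  show ?thesis
  proof (cases "N u \<inter> X = {}")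
    case True
    then show ?thesis using \<open>u \<in> S\<close> by (simp add: cA_S pinf_def)
  next
    case False
    define a where "a = real (card (N u \<inter> X))"
    define b where "b = real (card (N u - X))"
    have a: "a > 0" using False N_fin unfolding a_def by (simp add: card_gt_0_iff)
    have b: "b \<ge> 0" unfolding b_def by simp
    have "((\<lambda>d. 1 - b / ((1 + d) * a + b)) \<longlongrightarrow> 1 - 0) at_top"
    proof (intro tendsto_intros tendsto_divide_0[OF tendsto_const])
      have "filterlim (\<lambda>d. (1 + d) * a + b) at_top at_top"
        unfolding filterlim_at_top
      proof
        fix Z :: real
        show "eventually (\<lambda>d. Z \<le> (1 + d) * a + b) at_top"
          using eventually_ge_at_top[of "max 0 (Z / a)"]
        proof eventually_elim
          case (elim d)
          then have "Z \<le> d * a" using a by (simp add: divide_le_eq mult.commute)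
          moreover have "d * a \<le> (1 + d) * a + b" using a b elim by (simp add: algebra_simps)
          ultimately show ?case by linarith
        qed
      qed
      then show "filterlim (\<lambda>d. (1 + d) * a + b) at_infinity at_top"
        by (rule filterlim_at_top_imp_at_infinity)
    qed
    moreover have "eventually (\<lambda>d. 1 - b / ((1 + d) * a + b) = cA S d X u) at_top"
      using eventually_ge_at_top[of 0]
    proof eventually_elim
      case (elim d)
      have "(1 + d) * a + b > 0" using a b elim by (smt (verit) mult_pos_pos)
      then show ?case using \<open>u \<in> S\<close> by (simp add: cA_S a_def[symmetric] b_def[symmetric] field_simps)
    qed
    ultimately show ?thesis using \<open>u \<in> S\<close> False by (simp add: pinf_def tendsto_cong)
  qed
next
  case False
  then show ?thesis by (simp add: cA_nonS pinf_def)
qed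

lemma reach_rw: "reach_within V E w S d t X = rw (\<lambda>X. X = V) V (copyA_prob V E w S d) t X"
  by (induction t arbitrary: X) simp_all

abbreviation DV where "DV \<equiv> (\<lambda>X. X = V)"

lemma fp_from_Phi: "fp_from V E w S d X = Phi DV V (copyA_prob V E w S d) X"
  unfolding fp_from_def Phi_def reach_rw ..

lemma pinf_attr: "X \<subseteq> Y \<Longrightarrow> Y \<subseteq> V \<Longrightarrow> rw D V (pinf S) t X \<le> rw D V (pinf S) t Y"
  if "\<And>X Y. X \<subseteq> Y \<Longrightarrow> Y \<subseteq> V \<Longrightarrow> D X \<Longrightarrow> D Y"
  by (rule rw_attr[OF finV Vne pinf_ok pinf_mono that]) auto

lemma Phi_cA_le: assumes "0 \<le> d" "X \<subseteq> V"
  shows "Phi DV V (cA S d) X \<le> Phi DV V (pinf S) X"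
  unfolding Phi_def[of _ _ "cA S d"]
proof (rule cSUP_least)
  fix t
  have "rw DV V (cA S d) t X \<le> rw DV V (pinf S) t X"
    by (rule rw_cmp[OF finV Vne cA_ok[OF assms(1)] pinf_ok])
       (use cA_bounds[OF assms(1)] assms(2) in \<open>auto intro: pinf_attr\<close>)
  also have "\<dots> \<le> Phi DV V (pinf S) X" by (rule rw_le_Phi[OF finV Vne pinf_ok assms(2)])
  finally show "rw DV V (cA S d) t X \<le> Phi DV V (pinf S) X" .
qed simp

lemma fp_inf_eq: "fp_inf V E (\<lambda>_ _. 1) S = (1 / real (card V)) * (\<Sum>x\<in>V. Phi DV V (pinf S) {x})"
proof -
  define L where "L = (1 / real (card V)) * (\<Sum>x\<in>V. Phi DV V (pinf S) {x})"
  have fpe: "fp V E (\<lambda>_ _. 1) S d = (1 / real (card V)) * (\<Sum>x\<in>V. Phi DV V (cA S d) {x})" for d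
    unfolding fp_def fp_from_Phi ..
  have "((\<lambda>d. fp V E (\<lambda>_ _. 1) S d) \<longlongrightarrow> L) at_top"
  proof (rule order_tendstoI)
    fix a assume "L < a"
    show "eventually (\<lambda>d. fp V E (\<lambda>_ _. 1) S d < a) at_top"
      using eventually_ge_at_top[of 0]
    proof eventually_elim
      case (elim d)
      have "fp V E (\<lambda>_ _. 1) S d \<le> L" unfolding fpe L_def
        by (rule avg_mono) (rule Phi_cA_le[OF elim], auto)
      then show ?case using \<open>L < a\<close> by simp
    qed
  next
    fix a assume "a < L"
    define e where "e = L - a"
    have e: "e > 0" using \<open>a < L\<close> e_def by simp
    have "eventually (\<lambda>t. \<forall>x\<in>V. rw DV V (pinf S) t {x} > Phi DV V (pinf S) {x} - e) sequentially"
      unfolding eventually_ball_finite_distrib[OF finV]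
    proof
      fix x assume "x \<in> V"
      then have "(\<lambda>t. rw DV V (pinf S) t {x}) \<longlonglongrightarrow> Phi DV V (pinf S) {x}"
        by (intro rw_lim[OF finV Vne pinf_ok]) auto
      then show "eventually (\<lambda>t. rw DV V (pinf S) t {x} > Phi DV V (pinf S) {x} - e) sequentially"
        by (rule order_tendstoD) (use e in auto)
    qed
    then obtain t where t: "\<forall>x\<in>V. rw DV V (pinf S) t {x} > Phi DV V (pinf S) {x} - e"
      using eventually_sequentially by auto
    have "(\<Sum>x\<in>V. Phi DV V (pinf S) {x} - e) < (\<Sum>x\<in>V. rw DV V (pinf S) t {x})"
      by (rule sum_strict_mono[OF finV Vne]) (use t in auto)
    then have "(1 / real (card V)) * (\<Sum>x\<in>V. Phi DV V (pinf S) {x} - e) <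
          (1 / real (card V)) * (\<Sum>x\<in>V. rw DV V (pinf S) t {x})"
      using finV Vne card_gt_0_iff[of V] by (intro mult_strict_left_mono) auto
    moreover have "(1 / real (card V)) * (\<Sum>x\<in>V. Phi DV V (pinf S) {x} - e) = L - e"
      unfolding L_def using finV Vne card_gt_0_iff[of V] by (simp add: sum_subtractf right_diff_distrib)
    ultimately have lt: "a < (1 / real (card V)) * (\<Sum>x\<in>V. rw DV V (pinf S) t {x})"
      using e_def by simp
    have "((\<lambda>d. (1 / real (card V)) * (\<Sum>x\<in>V. rw DV V (cA S d) t {x})) \<longlongrightarrow>
           (1 / real (card V)) * (\<Sum>x\<in>V. rw DV V (pinf S) t {x})) at_top"
      by (intro tendsto_intros rw_tendsto cA_tendsto)
    from order_tendstoD(1)[OF this lt]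
    have "eventually (\<lambda>d. a < (1 / real (card V)) * (\<Sum>x\<in>V. rw DV V (cA S d) t {x})) at_top" .
    then show "eventually (\<lambda>d. a < fp V E (\<lambda>_ _. 1) S d) at_top"
      using eventually_ge_at_top[of 0]
    proof eventually_elim
      case (elim d)
      have "(1 / real (card V)) * (\<Sum>x\<in>V. rw DV V (cA S d) t {x}) \<le> fp V E (\<lambda>_ _. 1) S d"
        unfolding fpe
        by (rule avg_mono) (rule rw_le_Phi[OF finV Vne cA_ok[OF elim(2)]], auto)
      then show ?case using elim by simp
    qed
  qed
  then show ?thesis unfolding fp_inf_def L_def by (intro tendsto_Lim) auto
qed

end



context vg begin

fun step :: "'v set \<Rightarrow> 'v \<times> 'v \<Rightarrow> 'v set" where
  "step X (u, v) = (if v \<in> X then insert u X else X - {u})"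

fun hit :: "'v set \<Rightarrow> ('v \<times> 'v) list \<Rightarrow> 'v set \<Rightarrow> bool" where
  "hit S [] X = (X \<inter> S \<noteq> {})"
| "hit S ((u, v) # w) X = (X \<inter> S \<noteq> {} \<or> (u \<in> S \<and> N u \<inter> X \<noteq> {}) \<or> hit S w (step X (u, v)))"

definition Om :: "nat \<Rightarrow> ('v \<times> 'v) list set" where
  "Om t = {w. length w = t \<and> set w \<subseteq> Sigma V N}"

definition Wt :: "('v \<times> 'v) list \<Rightarrow> real" where
  "Wt w = prod_list (map (\<lambda>(u, v). 1 / (real (card V) * real (card (N u)))) w)"

definition cov :: "'v set \<Rightarrow> nat \<Rightarrow> 'v set \<Rightarrow> real" where
  "cov S t X = (\<Sum>w\<in>Om t. Wt w * (if hit S w X then 1 else 0))"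

lemma Sig_fin: "finite (Sigma V N)" using finV N_fin by auto

lemma Om_0: "Om 0 = {[]}" unfolding Om_def by auto

lemma Om_Suc: "Om (Suc t) = (\<lambda>(p, w). p # w) ` (Sigma V N \<times> Om t)"
  unfolding Om_def
  apply (rule set_eqI)
  apply (rule iffI)
   apply (case_tac x; force)
  by auto

lemma Om_fin: "finite (Om t)"
  by (induction t) (auto simp: Om_0 Om_Suc Sig_fin)

lemma sum_Om_Suc: "(\<Sum>w\<in>Om (Suc t). f w) = (\<Sum>u\<in>V. \<Sum>v\<in>N u. \<Sum>w\<in>Om t. f ((u, v) # w))"
proof -
  have inj: "inj_on (\<lambda>(p, w). p # w) (Sigma V N \<times> Om t)" by (auto simp: inj_on_def)
  have "(\<Sum>w\<in>Om (Suc t). f w) = (\<Sum>(p, w)\<in>Sigma V N \<times> Om t. f (p # w))"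
    unfolding Om_Suc by (subst sum.reindex[OF inj]) (simp add: case_prod_beta)
  also have "\<dots> = (\<Sum>p\<in>Sigma V N. \<Sum>w\<in>Om t. f (p # w))"
    by (rule sum.cartesian_product[symmetric])
  also have "\<dots> = (\<Sum>(u, v)\<in>Sigma V N. \<Sum>w\<in>Om t. f ((u, v) # w))"
    by (simp add: case_prod_beta)
  also have "\<dots> = (\<Sum>u\<in>V. \<Sum>v\<in>N u. \<Sum>w\<in>Om t. f ((u, v) # w))"
    by (rule sum.Sigma[symmetric]) (use finV N_fin in auto)
  finally show ?thesis .
qed

lemma Wt_Cons: "Wt ((u, v) # w) = 1 / (real (card V) * real (card (N u))) * Wt w"
  unfolding Wt_def by simp

lemma Wt_nonneg: "0 \<le> Wt w" unfolding Wt_def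
  by (induction w) auto

lemma Wt_sum: "(\<Sum>w\<in>Om t. Wt w) = 1"
proof (induction t)
  case 0 then show ?case by (simp add: Om_0 Wt_def)
next
  case (Suc t)
  have "(\<Sum>w\<in>Om (Suc t). Wt w) = (\<Sum>u\<in>V. \<Sum>v\<in>N u. 1 / (real (card V) * real (card (N u))))"
    unfolding sum_Om_Suc Wt_Cons by (simp only: sum_distrib_left[symmetric] Suc mult_1_right)
  also have "\<dots> = (\<Sum>u\<in>V. 1 / real (card V))"
    using N_card by (intro sum.cong) auto
  also have "\<dots> = 1" using finV Vne by simp
  finally show ?case .
qed

lemma sum_split_N:
  "(\<Sum>v\<in>N u. c * (if v \<in> X then A else B)) = c * (real (card (N u \<inter> X)) * A + real (card (N u - X)) * B)"
proof -
  have "(\<Sum>v\<in>N u. c * (if v \<in> X then A else B)) = (\<Sum>v\<in>N u. if v \<in> X then c * A else c * B)"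
    by (intro sum.cong) auto
  also have "\<dots> = (\<Sum>v\<in>N u \<inter> X. c * A) + (\<Sum>v\<in>N u - X. c * B)"
    using N_fin by (simp add: sum.If_cases Diff_eq)
  finally show ?thesis by (simp add: algebra_simps)
qed

lemma cov_step_eq:
  "(\<Sum>w\<in>Om t. Wt ((u, v) # w) * (if hit S ((u, v) # w) X then 1 else 0)) =
   1 / (real (card V) * real (card (N u))) *
   (if X \<inter> S \<noteq> {} \<or> (u \<in> S \<and> N u \<inter> X \<noteq> {}) then 1 else cov S t (step X (u, v)))"
proof (cases "X \<inter> S \<noteq> {} \<or> (u \<in> S \<and> N u \<inter> X \<noteq> {})")
  case True
  then have "hit S ((u, v) # w) X" for w by auto
  then show ?thesis using True
    by (simp only: Wt_Cons mult.assoc sum_distrib_left[symmetric]) (simp add: Wt_sum)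
next
  case False
  then have "hit S ((u, v) # w) X = hit S w (step X (u, v))" for w by (auto simp del: step.simps)
  then show ?thesis using False unfolding cov_def
    by (simp only: Wt_Cons mult.assoc sum_distrib_left[symmetric]) simp
qed

abbreviation DS where "DS S \<equiv> (\<lambda>X. X \<inter> S \<noteq> {})"

lemma cov_D: "X \<inter> S \<noteq> {} \<Longrightarrow> cov S t X = 1"
proof -
  assume h: "X \<inter> S \<noteq> {}"
  have "hit S w X" for w using h by (cases w) auto
  then show ?thesis unfolding cov_def using Wt_sum by simp
qed

lemma K_cov: "X \<subseteq> V \<Longrightarrow> rw (DS S) V (pinf S) t X = cov S t X"
proof (induction t arbitrary: X)
  case 0 then show ?case by (simp add: cov_def Om_0 Wt_def)
next
  case (Suc t)
  show ?case
  proof (cases "X \<inter> S \<noteq> {}")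
    case True then show ?thesis by (simp add: cov_D)
  next
    case False
    define c where "c u = 1 / (real (card V) * real (card (N u)))" for u
    have "cov S (Suc t) X = (\<Sum>u\<in>V. \<Sum>v\<in>N u. c u *
        (if u \<in> S \<and> N u \<inter> X \<noteq> {} then 1 else cov S t (step X (u, v))))"
      unfolding cov_def sum_Om_Suc cov_step_eq
      using False by (simp add: c_def)
    also have "\<dots> = (\<Sum>u\<in>V. (1 / real (card V)) * (pinf S X u * cov S t (X \<union> {u}) + (1 - pinf S X u) * cov S t (X - {u})))"
    proof (intro sum.cong refl)
      fix u assume u: "u \<in> V"
      have cN: "real (card (N u)) > 0" using N_card[OF u] by simp
      have cs: "real (card (N u \<inter> X)) + real (card (N u - X)) = real (card (N u))"
        using card_Int_Diff[OF N_fin, where B=X] by simp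
      show "(\<Sum>v\<in>N u. c u * (if u \<in> S \<and> N u \<inter> X \<noteq> {} then 1 else cov S t (step X (u, v)))) =
         (1 / real (card V)) * (pinf S X u * cov S t (X \<union> {u}) + (1 - pinf S X u) * cov S t (X - {u}))"
      proof (cases "u \<in> S \<and> N u \<inter> X \<noteq> {}")
        case True
        then have "cov S t (X \<union> {u}) = 1" by (intro cov_D) auto
        then show ?thesis using True cN by (simp add: c_def pinf_def)
      next
        case F2: False
        have "(\<Sum>v\<in>N u. c u * (if u \<in> S \<and> N u \<inter> X \<noteq> {} then 1 else cov S t (step X (u, v)))) =
              (\<Sum>v\<in>N u. c u * (if v \<in> X then cov S t (X \<union> {u}) else cov S t (X - {u})))"
          using F2 by (intro sum.cong refl) auto
        also have "\<dots> = c u * (real (card (N u \<inter> X)) * cov S t (X \<union> {u}) + real (card (N u - X)) * cov S t (X - {u}))"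
          by (rule sum_split_N)
        also have "\<dots> = (1 / real (card V)) * (pinf S X u * cov S t (X \<union> {u}) + (1 - pinf S X u) * cov S t (X - {u}))"
        proof (cases "u \<in> S")
          case True
          then have "N u \<inter> X = {}" using F2 by auto
          then have "real (card (N u - X)) = real (card (N u))" using cs by simp
          then show ?thesis using True \<open>N u \<inter> X = {}\<close> cN by (simp add: c_def pinf_def)
        next
          case False
          have e1: "1 - real (card (N u \<inter> X)) / real (card (N u)) = real (card (N u - X)) / real (card (N u))"
            using cs cN by (simp add: field_simps)
          have gen: "1 / (n * M) * (a * A + b * B) = 1 / n * (a / M * A + b / M * B)"
            if "M \<noteq> 0" "n \<noteq> 0" for n M a b A B :: real using that by (simp add: field_simps)
          have "real (card V) \<noteq> 0" using finV Vne by simp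
          then show ?thesis using False cN unfolding c_def pinf_def e1[symmetric]
            by (simp only: if_False gen[OF _ \<open>real (card V) \<noteq> 0\<close>]) (simp add: e1)
        qed
        finally show ?thesis .
      qed
    qed
    also have "\<dots> = rw (DS S) V (pinf S) (Suc t) X"
    proof -
      have i1: "rw (DS S) V (pinf S) t (insert u X) = cov S t (insert u X)" if "u \<in> V" for u
        using Suc.prems that by (intro Suc.IH) auto
      have i2: "rw (DS S) V (pinf S) t (X - {u}) = cov S t (X - {u})" for u
        using Suc.prems by (intro Suc.IH) auto
      show ?thesis using False
        by (simp only: rw.simps if_False sum_distrib_left) (intro sum.cong refl, simp add: i1 i2)
    qed
    finally show ?thesis by simp
  qed
qed

lemma hit_ex: "hit S w X \<longleftrightarrow> (\<exists>s\<in>S. hit {s} w X)"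
proof (induction w arbitrary: X)
  case Nil then show ?case by auto
next
  case (Cons p w)
  obtain u v where p: "p = (u, v)" by fastforce
  show ?case unfolding p hit.simps Cons.IH[of "step X (u, v)"] by blast
qed

lemma hit_mono: "S \<subseteq> T \<Longrightarrow> hit S w X \<Longrightarrow> hit T w X"
  using hit_ex by blast

lemma hit_empty: "\<not> hit {} w X"
  using hit_ex by blast

lemma ind_sub:
  assumes "finite T"
  shows "(if hit T w X then 1 else 0) \<le> (if hit A w X then 1 else 0) +
     (\<Sum>s\<in>T - A. (if hit (A \<union> {s}) w X then 1 else 0) - (if hit A w X then 1 else (0::real)))"
proof (cases "hit A w X")
  case True
  then have "hit (A \<union> {s}) w X" for s using hit_mono by blast
  with True show ?thesis by simp
next
  case False
  show ?thesis
  proof (cases "hit T w X")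
    case True
    then obtain s where s: "s \<in> T" "hit {s} w X" using hit_ex by blast
    then have sA: "s \<notin> A" using False hit_ex by blast
    have h: "hit (A \<union> {s}) w X" using s hit_mono by blast
    have "1 \<le> (\<Sum>s\<in>T - A. (if hit (A \<union> {s}) w X then 1 else (0::real)))"
    proof -
      have "(\<Sum>s'\<in>{s}. (if hit (A \<union> {s'}) w X then 1 else (0::real))) \<le> (\<Sum>s\<in>T - A. (if hit (A \<union> {s}) w X then 1 else 0))"
        by (rule sum_mono2) (use assms s sA in auto)
      then show ?thesis using h by simp
    qed
    then show ?thesis using False True by simp
  next
    case False
    then show ?thesis using \<open>\<not> hit A w X\<close> by (simp add: sum_nonneg)
  qed
qed

lemma cov_sub:
  assumes "finite T"
  shows "cov T t X \<le> cov A t X + (\<Sum>s\<in>T - A. cov (A \<union> {s}) t X - cov A t X)"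
proof -
  have "cov T t X \<le> (\<Sum>w\<in>Om t. Wt w * ((if hit A w X then 1 else 0) +
     (\<Sum>s\<in>T - A. (if hit (A \<union> {s}) w X then 1 else 0) - (if hit A w X then 1 else (0::real)))))"
    unfolding cov_def by (intro sum_mono mult_left_mono ind_sub assms Wt_nonneg)
  also have "\<dots> = cov A t X + (\<Sum>s\<in>T - A. cov (A \<union> {s}) t X - cov A t X)"
    unfolding cov_def
    by (simp add: algebra_simps sum.distrib sum_distrib_left sum_subtractf sum.swap[of _ "T - A"])
  finally show ?thesis .
qed

lemma cov_nonneg: "0 \<le> cov S t X"
  unfolding cov_def by (intro sum_nonneg) (simp add: Wt_nonneg)

lemma cov_empty: "cov {} t X = 0"
  unfolding cov_def by (simp add: hit_empty)

lemma cov_mono: "A \<subseteq> B \<Longrightarrow> cov A t X \<le> cov B t X"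
  unfolding cov_def using hit_mono
  by (intro sum_mono mult_left_mono) (auto simp: Wt_nonneg)

end



context vg begin

lemma edge_out:
  assumes "(x, y) \<in> E\<^sup>*" "x \<in> Z" "y \<notin> Z"
  shows "\<exists>a b. (a, b) \<in> E \<and> a \<in> Z \<and> b \<notin> Z"
  using assms by (induction rule: rtrancl_induct) auto

lemma Phi_one:
  assumes X: "X \<subseteq> V" "X \<inter> S \<noteq> {}"
  shows "Phi DV V (pinf S) X = 1"
proof -
  define F where "F = Phi DV V (pinf S)"
  define Y where "Y = {Z. Z \<subseteq> V \<and> Z \<inter> S \<noteq> {}}"
  have Yfin: "finite Y" unfolding Y_def by (rule finite_subset[of _ "Pow V"]) (use finV in auto)
  have XY: "X \<in> Y" using X unfolding Y_def by auto
  define m where "m = Min (F ` Y)"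
  have mle: "m \<le> F Z" if "Z \<in> Y" for Z unfolding m_def using Yfin that by (intro Min_le) auto
  have Fb: "0 \<le> F Z \<and> F Z \<le> 1" if "Z \<subseteq> V" for Z
    unfolding F_def by (rule Phi_bounds[OF finV Vne pinf_ok that])
  have pb: "0 \<le> pinf S Z u \<and> pinf S Z u \<le> 1" if "Z \<subseteq> V" "u \<in> V" for Z u
    using pinf_ok that unfolding okp_def by auto
  have main: "\<forall>Z. Z \<in> Y \<longrightarrow> card (V - Z) = n \<longrightarrow> F Z = m \<longrightarrow> m = 1" for n
  proof (induction n)
    case 0
    show ?case
    proof (intro allI impI)
      fix Z assume Z: "Z \<in> Y" "card (V - Z) = 0" "F Z = m"
      have "V - Z = {}" using Z(2) finV by (simp add: card_eq_0_iff)
      then have "Z = V" using Z(1) unfolding Y_def by blast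
      then show "m = 1" using Z unfolding F_def by (simp add: Phi_D)
    qed
  next
    case (Suc n)
    show ?case
    proof (intro allI impI)
      fix Z assume Z: "Z \<in> Y" "card (V - Z) = Suc n" "F Z = m"
      have ZV: "Z \<subseteq> V" "Z \<inter> S \<noteq> {}" using Z(1) unfolding Y_def by auto
      have "Z \<noteq> V" using Z(2) by (metis Diff_cancel card.empty nat.distinct(1))
      then obtain y where y: "y \<in> V" "y \<notin> Z" using ZV by auto
      obtain x where x: "x \<in> Z" using ZV by auto
      have "(x, y) \<in> E\<^sup>*" using conn x y ZV by blast
      then obtain a b where ab: "(a, b) \<in> E" "a \<in> Z" "b \<notin> Z" using edge_out x y by blast
      have bV: "b \<in> V" using ab E_sub by auto
      have aN: "a \<in> N b \<inter> Z" using ab E_sub unfolding in_nbrs_def by auto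
      have pbpos: "pinf S Z b > 0"
      proof (cases "b \<in> S")
        case True then show ?thesis using aN by (auto simp: pinf_def)
      next
        case False
        have "card (N b \<inter> Z) > 0" using aN N_fin by (auto simp: card_gt_0_iff)
        then show ?thesis using False N_card[OF bV] by (simp add: pinf_def)
      qed
      define Z' where "Z' = Z \<union> {b}"
      have Z'Y: "Z' \<in> Y" using ZV bV unfolding Y_def Z'_def by blast
      have cZ': "card (V - Z') = n"
      proof -
        have "V - Z = insert b (V - Z')" using bV ab(3) unfolding Z'_def by blast
        moreover have "b \<notin> V - Z'" unfolding Z'_def by blast
        moreover have "finite (V - Z')" using finV by blast
        ultimately have "card (V - Z) = Suc (card (V - Z'))" by (metis card_insert_disjoint)
        then show ?thesis using Z(2) by simp
      qed
      have "F Z' = m"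
      proof (rule ccontr)
        assume "F Z' \<noteq> m"
        then have gt: "F Z' > m" using mle[OF Z'Y] by simp
        define T where "T u = pinf S Z u * F (Z \<union> {u}) + (1 - pinf S Z u) * F (Z - {u})" for u
        have harm: "F Z = (1 / real (card V)) * (\<Sum>u\<in>V. T u)"
          unfolding F_def T_def using Phi_harm[OF finV Vne pinf_ok ZV(1), of DV] \<open>Z \<noteq> V\<close> by simp
        have Tge: "m \<le> T u" if u: "u \<in> V" for u
        proof -
          have p: "0 \<le> pinf S Z u" "pinf S Z u \<le> 1" using pb[OF ZV(1) u] by auto
          have "Z \<union> {u} \<in> Y" using ZV u unfolding Y_def by auto
          then have a1: "pinf S Z u * m \<le> pinf S Z u * F (Z \<union> {u})"
            using mle p by (simp add: mult_left_mono)
          have a2: "(1 - pinf S Z u) * m \<le> (1 - pinf S Z u) * F (Z - {u})"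
          proof (cases "(Z - {u}) \<inter> S = {}")
            case True
            then have "u \<in> Z \<inter> S" using ZV by auto
            then have "u \<in> N u \<inter> Z" using N_self u by auto
            then have "pinf S Z u = 1" using \<open>u \<in> Z \<inter> S\<close> by (auto simp: pinf_def)
            then show ?thesis by simp
          next
            case False
            then have "Z - {u} \<in> Y" using ZV unfolding Y_def by auto
            then show ?thesis using mle p by (simp add: mult_left_mono)
          qed
          have "m = pinf S Z u * m + (1 - pinf S Z u) * m" by (simp add: algebra_simps)
          also have "\<dots> \<le> T u" unfolding T_def using a1 a2 by simp
          finally show ?thesis .
        qed
        have Tgt: "m < T b"
        proof -
          have p: "0 \<le> pinf S Z b" "pinf S Z b \<le> 1" using pb[OF ZV(1) bV] by auto
          have "Z - {b} \<in> Y \<or> pinf S Z b = 1"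
          proof (cases "(Z - {b}) \<inter> S = {}")
            case True
            then have "b \<in> Z \<inter> S" using ZV by auto
            then show ?thesis using ab by auto
          next
            case False then show ?thesis using ZV unfolding Y_def by auto
          qed
          then have a2: "(1 - pinf S Z b) * m \<le> (1 - pinf S Z b) * F (Z - {b})"
            using mle p by (auto simp: mult_left_mono)
          have a1: "pinf S Z b * m < pinf S Z b * F Z'"
            using pbpos gt by simp
          have "m = pinf S Z b * m + (1 - pinf S Z b) * m" by (simp add: algebra_simps)
          also have "\<dots> < T b" unfolding T_def Z'_def[symmetric] using a1 a2 by simp
          finally show ?thesis .
        qed
        have "(\<Sum>u\<in>V. m) < (\<Sum>u\<in>V. T u)"
          by (rule sum_strict_mono_ex1[OF finV]) (use Tge Tgt bV in auto)
        then have "real (card V) * m < (\<Sum>u\<in>V. T u)" by simp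
        then have "m < (1 / real (card V)) * (\<Sum>u\<in>V. T u)"
          using finV Vne card_gt_0_iff[of V] by (simp add: pos_less_divide_eq mult.commute)
        then show False using harm Z(3) by simp
      qed
      then show "m = 1" using Suc.IH Z'Y cZ' by blast
    qed
  qed
  have "m \<in> F ` Y" unfolding m_def using Yfin XY by (intro Min_in) auto
  then obtain Z0 where "Z0 \<in> Y" "F Z0 = m" by auto
  then have "m = 1" using main by blast
  then show ?thesis using mle[OF XY] Fb[OF X(1)] unfolding F_def by simp
qed

lemma Phi_DS_DV:
  assumes "S \<subseteq> V" "S \<noteq> {}" "X \<subseteq> V"
  shows "Phi (DS S) V (pinf S) X = Phi DV V (pinf S) X"
proof (rule antisym)
  have "rw (DS S) V (pinf S) t X \<le> Phi DV V (pinf S) X" if "X \<subseteq> V" for t X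
    using that
  proof (induction t arbitrary: X)
    case 0 then show ?case
      using Phi_one Phi_bounds[OF finV Vne pinf_ok 0] by auto
  next
    case (Suc t)
    show ?case
    proof (cases "X \<inter> S \<noteq> {}")
      case True then show ?thesis using Phi_one[OF Suc.prems True] by (simp add: rw_D)
    next
      case False
      then have "X \<noteq> V" using assms by auto
      have pb: "0 \<le> pinf S X u \<and> pinf S X u \<le> 1" if "u \<in> V" for u
        using pinf_ok that Suc.prems unfolding okp_def by auto
      have "rw (DS S) V (pinf S) (Suc t) X \<le> (1 / real (card V)) *
         (\<Sum>u\<in>V. pinf S X u * Phi DV V (pinf S) (X \<union> {u}) + (1 - pinf S X u) * Phi DV V (pinf S) (X - {u}))"
      proof -
        have ih1: "rw (DS S) V (pinf S) t (X \<union> {u}) \<le> Phi DV V (pinf S) (X \<union> {u})" if "u \<in> V" for u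
          using Suc.prems that by (intro Suc.IH) auto
        have ih2: "rw (DS S) V (pinf S) t (X - {u}) \<le> Phi DV V (pinf S) (X - {u})" for u
          using Suc.prems by (intro Suc.IH) auto
        show ?thesis using False
          apply (simp only: rw.simps if_False)
          apply (rule avg_mono)
          apply (rule add_mono; rule mult_left_mono)
          using pb ih1 ih2 by auto
      qed
      also have "\<dots> = Phi DV V (pinf S) X"
        using Phi_harm[OF finV Vne pinf_ok Suc.prems, of DV] \<open>X \<noteq> V\<close> by simp
      finally show ?thesis .
    qed
  qed
  then show "Phi (DS S) V (pinf S) X \<le> Phi DV V (pinf S) X"
    unfolding Phi_def[of "DS S"] using assms(3) by (intro cSUP_least) auto
next
  show "Phi DV V (pinf S) X \<le> Phi (DS S) V (pinf S) X"
    unfolding Phi_def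
  proof (rule cSUP_mono)
    show "bdd_above (range (\<lambda>t. rw (DS S) V (pinf S) t X))"
      using rw_bounds[OF finV Vne pinf_ok assms(3)] by (auto intro!: bdd_aboveI2[where M=1])
    fix t
    have "rw DV V (pinf S) t X \<le> rw (DS S) V (pinf S) t X"
      by (rule rw_D_mono[OF finV Vne pinf_ok assms(3)]) (use assms in auto)
    then show "\<exists>t'\<in>UNIV. rw DV V (pinf S) t X \<le> rw (DS S) V (pinf S) t' X" by blast
  qed simp
qed

definition g :: "'v set \<Rightarrow> real" where
  "g S = (1 / real (card V)) * (\<Sum>x\<in>V. Phi (DS S) V (pinf S) {x})"

lemma fp_inf_g: "S \<subseteq> V \<Longrightarrow> S \<noteq> {} \<Longrightarrow> fp_inf V E (\<lambda>_ _. 1) S = g S"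
  unfolding fp_inf_eq g_def by (simp add: Phi_DS_DV)

definition G :: "'v set \<Rightarrow> nat \<Rightarrow> real" where
  "G S t = (1 / real (card V)) * (\<Sum>x\<in>V. cov S t {x})"

lemma G_lim: "(\<lambda>t. G S t) \<longlonglongrightarrow> g S"
proof -
  have "(\<lambda>t. (1 / real (card V)) * (\<Sum>x\<in>V. rw (DS S) V (pinf S) t {x})) \<longlonglongrightarrow> g S"
    unfolding g_def by (intro tendsto_intros rw_lim[OF finV Vne pinf_ok]) auto
  moreover have "(1 / real (card V)) * (\<Sum>x\<in>V. rw (DS S) V (pinf S) t {x}) = G S t" for t
    unfolding G_def by (intro arg_cong[where f="(*) _"] sum.cong refl K_cov) auto
  ultimately show ?thesis by simp
qed

lemma g_sub:
  assumes "finite T"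
  shows "g T \<le> g A + (\<Sum>s\<in>T - A. g (A \<union> {s}) - g A)"
proof -
  have "G T t \<le> G A t + (\<Sum>s\<in>T - A. G (A \<union> {s}) t - G A t)" for t
  proof -
    have "G T t \<le> (1 / real (card V)) * (\<Sum>x\<in>V. cov A t {x} + (\<Sum>s\<in>T - A. cov (A \<union> {s}) t {x} - cov A t {x}))"
      unfolding G_def by (rule avg_mono) (rule cov_sub[OF assms])
    also have "\<dots> = G A t + (\<Sum>s\<in>T - A. G (A \<union> {s}) t - G A t)"
      unfolding G_def
      by (simp add: sum.distrib sum_subtractf sum.swap[of _ "T - A"] sum_distrib_left right_diff_distrib distrib_left)
    finally show ?thesis .
  qed
  moreover have "(\<lambda>t. G A t + (\<Sum>s\<in>T - A. G (A \<union> {s}) t - G A t)) \<longlonglongrightarrow> g A + (\<Sum>s\<in>T - A. g (A \<union> {s}) - g A)"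
    by (intro tendsto_intros G_lim)
  ultimately show ?thesis using G_lim[of T] by (intro LIMSEQ_le) auto
qed

lemma g_mono: "A \<subseteq> B \<Longrightarrow> g A \<le> g B"
proof -
  assume h: "A \<subseteq> B"
  have "G A t \<le> G B t" for t unfolding G_def by (rule avg_mono) (rule cov_mono[OF h])
  then show ?thesis using G_lim[of A] G_lim[of B] by (intro LIMSEQ_le) auto
qed

lemma g_empty: "g {} = 0"
  using G_lim[of "{}"] unfolding G_def by (simp add: cov_empty LIMSEQ_const_iff)

lemma g_nonneg: "0 \<le> g S"
  using g_mono[of "{}" S] g_empty by simp

end



lemma exp_bound: "k > 0 \<Longrightarrow> (1 - 1 / real k) ^ k \<le> exp (-1)"
proof -
  assume k: "k > 0"
  have "1 - 1 / real k \<le> exp (- (1 / real k))" using exp_ge_add_one_self[of "- (1 / real k)"] by simp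
  moreover have "0 \<le> 1 - 1 / real k" using k by (simp add: field_simps)
  ultimately have "(1 - 1 / real k) ^ k \<le> exp (- (1 / real k)) ^ k" by (rule power_mono)
  also have "\<dots> = exp (- (1 / real k) * real k)" by (simp add: exp_of_nat_mult[symmetric] mult.commute)
  also have "\<dots> = exp (-1)" using k by simp
  finally show ?thesis .
qed

theorem theorem4:
  fixes V :: "'v set" and E :: "('v \<times> 'v) set" and k :: nat
    and Sstar :: "'v set" and vs :: "'v list"
  assumes finV: "finite V"
    and E_sub: "E \<subseteq> V \<times> V"
    and undirected: "sym E"
    and self_loops: "\<forall>u\<in>V. (u, u) \<in> E"
    and connected: "\<forall>u\<in>V. \<forall>v\<in>V. (u, v) \<in> E\<^sup>*"
    and k_pos: "0 < k" and k_le: "k \<le> card V"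
    and Sstar_sub: "Sstar \<subseteq> V" and Sstar_card: "card Sstar = k"
    and Sstar_opt: "\<forall>S. S \<subseteq> V \<and> card S = k \<longrightarrow>
                      fp_inf V E (\<lambda>_ _. 1) S \<le> fp_inf V E (\<lambda>_ _. 1) Sstar"
    and vs_len: "length vs = k"
    and greedy: "\<forall>i<k. vs ! i \<in> V - set (take i vs) \<and>
                   (\<forall>v\<in>V - set (take i vs).
                      fp_inf V E (\<lambda>_ _. 1) (set (take i vs) \<union> {v})
                      \<le> fp_inf V E (\<lambda>_ _. 1) (set (take i vs) \<union> {vs ! i}))"
  shows "fp_inf V E (\<lambda>_ _. 1) (set vs) \<ge> (1 - 1 / exp 1) * fp_inf V E (\<lambda>_ _. 1) Sstar"
proof -
  have Vne: "V \<noteq> {}" using k_pos k_le by auto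
  interpret vg V E using finV Vne E_sub self_loops connected by unfold_locales
  define Si where "Si i = set (take i vs)" for i
  have Si_sub: "Si i \<subseteq> V" for i
  proof
    fix x assume "x \<in> Si i"
    then obtain j where j: "j < length (take i vs)" "x = take i vs ! j" unfolding Si_def by (auto simp: in_set_conv_nth)
    then have "j < k" "j < i" "x = vs ! j" using vs_len by auto
    then show "x \<in> V" using greedy by auto
  qed
  have Si_Suc: "Si (Suc i) = Si i \<union> {vs ! i}" if "i < k" for i
    unfolding Si_def using that vs_len by (simp add: take_Suc_conv_app_nth)
  have Sk: "Si k = set vs" unfolding Si_def using vs_len by simp
  have Sne: "Sstar \<noteq> {}" using Sstar_card k_pos by auto
  have finS: "finite Sstar" using finV Sstar_sub finite_subset by blast
  have step: "g Sstar \<le> g (Si i) + real k * (g (Si (Suc i)) - g (Si i))" if i: "i < k" for i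
  proof -
    define D where "D = g (Si (Suc i)) - g (Si i)"
    have D0: "0 \<le> D" unfolding D_def using g_mono[of "Si i" "Si (Suc i)"] Si_Suc[OF i] by auto
    have trm: "g (Si i \<union> {s}) - g (Si i) \<le> D" if s: "s \<in> Sstar - Si i" for s
    proof -
      have sV: "s \<in> V - Si i" using s Sstar_sub by auto
      have "fp_inf V E (\<lambda>_ _. 1) (Si i \<union> {s}) \<le> fp_inf V E (\<lambda>_ _. 1) (Si i \<union> {vs ! i})"
        using greedy i sV unfolding Si_def by auto
      moreover have "fp_inf V E (\<lambda>_ _. 1) (Si i \<union> {s}) = g (Si i \<union> {s})"
        using Si_sub[of i] sV by (intro fp_inf_g) auto
      moreover have "fp_inf V E (\<lambda>_ _. 1) (Si i \<union> {vs ! i}) = g (Si i \<union> {vs ! i})"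
        using Si_sub[of "Suc i"] Si_Suc[OF i] by (intro fp_inf_g) auto
      ultimately show ?thesis unfolding D_def using Si_Suc[OF i] by simp
    qed
    have "g Sstar \<le> g (Si i) + (\<Sum>s\<in>Sstar - Si i. g (Si i \<union> {s}) - g (Si i))"
      by (rule g_sub[OF finS])
    also have "(\<Sum>s\<in>Sstar - Si i. g (Si i \<union> {s}) - g (Si i)) \<le> real (card (Sstar - Si i)) * D"
      using trm by (intro sum_bounded_above) auto
    also have "\<dots> \<le> real k * D"
    proof -
      have "card (Sstar - Si i) \<le> card Sstar" using finS by (intro card_mono) auto
      then show ?thesis using Sstar_card D0 by (intro mult_right_mono) auto
    qed
    finally show ?thesis unfolding D_def by simp
  qed
  define a where "a i = g Sstar - g (Si i)" for i
  define q where "q = 1 - 1 / real k"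
  have q0: "0 \<le> q" unfolding q_def using k_pos by (simp add: field_simps)
  have arec: "a (Suc i) \<le> q * a i" if "i < k" for i
  proof -
    have "a i \<le> real k * (a i - a (Suc i))" using step[OF that] unfolding a_def by simp
    then have "real k * a (Suc i) \<le> (real k - 1) * a i" by (simp add: algebra_simps)
    then have "a (Suc i) \<le> (real k - 1) / real k * a i"
      using k_pos by (simp add: field_simps)
    moreover have "(real k - 1) / real k = q" unfolding q_def using k_pos by (simp add: field_simps)
    ultimately show ?thesis by simp
  qed
  have apow: "i \<le> k \<Longrightarrow> a i \<le> q ^ i * a 0" for i
  proof (induction i)
    case 0 then show ?case by simp
  next
    case (Suc i)
    then have "a (Suc i) \<le> q * a i" by (intro arec) auto
    also have "\<dots> \<le> q * (q ^ i * a 0)" using Suc q0 by (intro mult_left_mono) auto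
    finally show ?case by simp
  qed
  have a0: "a 0 = g Sstar" unfolding a_def Si_def using g_empty by simp
  have "a k \<le> q ^ k * g Sstar" using apow[of k] a0 by simp
  also have "\<dots> \<le> exp (-1) * g Sstar"
    unfolding q_def by (intro mult_right_mono exp_bound k_pos g_nonneg)
  finally have "g Sstar - g (set vs) \<le> exp (-1) * g Sstar" unfolding a_def Sk .
  then have "(1 - 1 / exp 1) * g Sstar \<le> g (set vs)" by (simp add: exp_minus field_simps)
  moreover have "fp_inf V E (\<lambda>_ _. 1) (set vs) = g (set vs)"
    using Si_sub[of k] Sk vs_len k_pos by (intro fp_inf_g) auto
  moreover have "fp_inf V E (\<lambda>_ _. 1) Sstar = g Sstar" using Sstar_sub Sne by (intro fp_inf_g)
  ultimately show ?thesis by simp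
qed


end
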